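(* Let $G=(V,E)$ be an undirected graph, $f,g:V\to\mathbb{Z}$ with $f\le g$, suppose $G$ admits an $(f,g)$-bounded orientation, and let $T\subseteq V$. Then there exist functions $f',g':V\to\mathbb{Z}$ with $f\le f'\le g'\le g$ and a subset $X_T\subseteq V$ such that an $(f,g)$-bounded orientation $D$ of $G$ minimizes the in-degree $\varrho_D(T)$ of $T$ (among all $(f,g)$-bounded orientations of $G$) if and only if $D$ is an $(f',g')$-bounded orientation with $\varrho_D(X_T)=0$.
   Context: $\varrho_D(v)$ is the number of arcs with head $v$; $\varrho_D(X)$ is the number of arcs with head in $X$ and tail in $V-X$. An orientation is $(f,g)$-bounded if $f(v)\le\varrho_D(v)\le g(v)$ for all $v\in V$. *)

theory Defs
  imports Main
begin

text \<open>An undirected (multi)graph is given by a finite vertex set V, a finite edge set E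
and an endpoint map ends :: 'e => 'v * 'v. An orientation is a map D :: 'e => bool:
D e = True orients e from fst (ends e) to snd (ends e), D e = False the other way.\<close>

definition head :: "('e \<Rightarrow> 'v \<times> 'v) \<Rightarrow> ('e \<Rightarrow> bool) \<Rightarrow> 'e \<Rightarrow> 'v" where
  "head ends D e = (if D e then snd (ends e) else fst (ends e))"

definition tail :: "('e \<Rightarrow> 'v \<times> 'v) \<Rightarrow> ('e \<Rightarrow> bool) \<Rightarrow> 'e \<Rightarrow> 'v" where
  "tail ends D e = (if D e then fst (ends e) else snd (ends e))"

definition indeg :: "'e set \<Rightarrow> ('e \<Rightarrow> 'v \<times> 'v) \<Rightarrow> ('e \<Rightarrow> bool) \<Rightarrow> 'v \<Rightarrow> nat" where
  "indeg E ends D v = card {e \<in> E. head ends D e = v}"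

definition indeg_set :: "'v set \<Rightarrow> 'e set \<Rightarrow> ('e \<Rightarrow> 'v \<times> 'v) \<Rightarrow> ('e \<Rightarrow> bool) \<Rightarrow> 'v set \<Rightarrow> nat" where
  "indeg_set V E ends D X = card {e \<in> E. head ends D e \<in> X \<and> tail ends D e \<in> V - X}"

definition bounded_orientation ::
  "'v set \<Rightarrow> 'e set \<Rightarrow> ('e \<Rightarrow> 'v \<times> 'v) \<Rightarrow> ('v \<Rightarrow> int) \<Rightarrow> ('v \<Rightarrow> int) \<Rightarrow> ('e \<Rightarrow> bool) \<Rightarrow> bool" where
  "bounded_orientation V E ends f g D \<longleftrightarrow>
     (\<forall>v\<in>V. f v \<le> int (indeg E ends D v) \<and> int (indeg E ends D v) \<le> g v)"

end

theory Submission
  imports Defs "HOL-Library.Transitive_Closure_Table"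
begin

lemma indeg_sum: "finite E \<Longrightarrow> int (indeg E ends D x) = (\<Sum>e\<in>E. if head ends D e = x then 1 else 0)"
  unfolding indeg_def by (simp add: sum.If_cases Collect_conj_eq)

lemma flip_indeg:
  assumes "finite E" "e \<in> E" "head ends D e \<noteq> tail ends D e"
  shows "int (indeg E ends (D(e := \<not> D e)) x) = int (indeg E ends D x)
     + (if x = tail ends D e then 1 else 0) - (if x = head ends D e then 1 else 0)"
proof -
  let ?D = "D(e := \<not> D e)"
  have h1: "head ends ?D e = tail ends D e" by (simp add: head_def tail_def)
  have h2: "\<And>e'. e' \<noteq> e \<Longrightarrow> head ends ?D e' = head ends D e'" by (simp add: head_def)
  define S where "S = (\<Sum>e'\<in>E-{e}. if head ends D e' = x then (1::int) else 0)"
  have "(\<Sum>e'\<in>E-{e}. if head ends ?D e' = x then (1::int) else 0) = S"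
    unfolding S_def by (rule sum.cong) (auto simp: h2)
  then have eq1: "int (indeg E ends ?D x) = (if tail ends D e = x then 1 else 0) + S"
    using assms h1 by (simp add: indeg_sum sum.remove del: fun_upd_apply)
  have eq2: "int (indeg E ends D x) = (if head ends D e = x then 1 else 0) + S"
    using assms unfolding S_def by (simp add: indeg_sum sum.remove)
  show ?thesis using eq1 eq2 assms(3) by auto
qed

lemma path_flip:
  assumes "finite E"
  shows "rtrancl_path (\<lambda>u w. \<exists>e\<in>E. tail ends D e = u \<and> head ends D e = w \<and> u \<noteq> w) u xs a
    \<Longrightarrow> distinct (u # xs) \<Longrightarrow>
    \<exists>D'. (\<forall>e. tail ends D e \<notin> set (u # xs) \<longrightarrow> D' e = D e) \<and>
      (\<forall>x. int (indeg E ends D' x) = int (indeg E ends D x) + (if x = u then 1 else 0) - (if x = a then 1 else 0))"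
proof (induction rule: rtrancl_path.induct)
  case (base x)
  then show ?case by (intro exI[of _ D]) auto
next
  case (step u w ws a)
  then obtain D1 where D1: "\<forall>e. tail ends D e \<notin> set (w # ws) \<longrightarrow> D1 e = D e"
    "\<forall>x. int (indeg E ends D1 x) = int (indeg E ends D x) + (if x = w then 1 else 0) - (if x = a then 1 else 0)"
    by auto
  from step obtain e where e: "e \<in> E" "tail ends D e = u" "head ends D e = w" "u \<noteq> w" by auto
  have "u \<notin> set (w # ws)" using step by auto
  then have De: "D1 e = D e" using D1(1) e by auto
  then have ht: "head ends D1 e = w" "tail ends D1 e = u" using e by (auto simp: head_def tail_def)
  define D2 where "D2 = D1(e := \<not> D1 e)"
  have "\<forall>x. int (indeg E ends D2 x) = int (indeg E ends D x) + (if x = u then 1 else 0) - (if x = a then 1 else 0)"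
    using flip_indeg[OF assms e(1), of ends D1] ht e(4) D1(2) unfolding D2_def by auto
  moreover have "\<forall>e'. tail ends D e' \<notin> set (u # w # ws) \<longrightarrow> D2 e' = D e'"
    using D1(1) e(2) unfolding D2_def by auto
  ultimately show ?case by blast
qed

lemma rho_sum:
  assumes "finite E" "\<forall>e\<in>E. fst (ends e) \<in> V \<and> snd (ends e) \<in> V" "X \<subseteq> V" "finite X"
  shows "int (indeg_set V E ends D X) = (\<Sum>v\<in>X. int (indeg E ends D v))
     - int (card {e\<in>E. fst (ends e) \<in> X \<and> snd (ends e) \<in> X})"
proof -
  have "(\<Sum>v\<in>X. indeg E ends D v) = card (\<Union>v\<in>X. {e\<in>E. head ends D e = v})"
    unfolding indeg_def using assms by (subst card_UN_disjoint) auto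
  also have "(\<Union>v\<in>X. {e\<in>E. head ends D e = v}) = {e\<in>E. head ends D e \<in> X \<and> tail ends D e \<in> V - X}
     \<union> {e\<in>E. fst (ends e) \<in> X \<and> snd (ends e) \<in> X}"
    using assms(2) by (auto simp: head_def tail_def split: if_splits)
  also have "card \<dots> = indeg_set V E ends D X + card {e\<in>E. fst (ends e) \<in> X \<and> snd (ends e) \<in> X}"
    unfolding indeg_set_def using assms(1)
    by (subst card_Un_disjoint) (auto simp: head_def tail_def split: if_splits)
  finally have "int (\<Sum>v\<in>X. indeg E ends D v) = int (indeg_set V E ends D X) + int (card {e\<in>E. fst (ends e) \<in> X \<and> snd (ends e) \<in> X})"
    by simp
  then show ?thesis by simp
qed


theorem corollary5p12:
  fixes V :: "'v set" and E :: "'e set" and ends :: "'e \<Rightarrow> 'v \<times> 'v"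
    and f g :: "'v \<Rightarrow> int" and T :: "'v set"
  assumes "finite V" and "finite E"
    and "\<forall>e\<in>E. fst (ends e) \<in> V \<and> snd (ends e) \<in> V"
    and "\<forall>v\<in>V. f v \<le> g v"
    and "\<exists>D. bounded_orientation V E ends f g D"
    and "T \<subseteq> V"
  shows "\<exists>f' g' :: 'v \<Rightarrow> int. \<exists>X\<^sub>T.
    (\<forall>v\<in>V. f v \<le> f' v \<and> f' v \<le> g' v \<and> g' v \<le> g v) \<and> X\<^sub>T \<subseteq> V \<and>
    (\<forall>D. (bounded_orientation V E ends f g D \<and>
          (\<forall>D'. bounded_orientation V E ends f g D' \<longrightarrow>
                 indeg_set V E ends D T \<le> indeg_set V E ends D' T))
        \<longleftrightarrow> (bounded_orientation V E ends f' g' D \<and> indeg_set V E ends D X\<^sub>T = 0))"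
proof -
  note finV = assms(1) and finE = assms(2) and endsV = assms(3) and fg = assms(4) and TV = assms(6)
  obtain D1 where "bounded_orientation V E ends f g D1" using assms(5) by blast
  then obtain D0 where D0b: "bounded_orientation V E ends f g D0"
    and D0opt: "\<forall>D'. bounded_orientation V E ends f g D' \<longrightarrow> indeg_set V E ends D0 T \<le> indeg_set V E ends D' T"
    using ex_has_least_nat[of "bounded_orientation V E ends f g" D1 "\<lambda>D. indeg_set V E ends D T"] by blast
  define R where "R = (\<lambda>u w. \<exists>e\<in>E. tail ends D0 e = u \<and> head ends D0 e = w \<and> u \<noteq> w)"
  define A where "A = {t\<in>T. int (indeg E ends D0 t) > f t}"
  define Z where "Z = {v\<in>V. \<exists>a\<in>A. R\<^sup>*\<^sup>* v a}"
  have ZV: "Z \<subseteq> V" unfolding Z_def by auto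
  have finZ: "finite Z" using finV ZV finite_subset by blast
  have finT: "finite T" using finV TV finite_subset by blast
  have tailV: "\<And>D e. e \<in> E \<Longrightarrow> tail ends D e \<in> V" using endsV by (auto simp: tail_def)
  have headV: "\<And>D e. e \<in> E \<Longrightarrow> head ends D e \<in> V" using endsV by (auto simp: head_def)
  have rhoZ0: "indeg_set V E ends D0 Z = 0"
  proof -
    have "{e\<in>E. head ends D0 e \<in> Z \<and> tail ends D0 e \<in> V - Z} = {}"
    proof (rule ccontr)
      assume "{e\<in>E. head ends D0 e \<in> Z \<and> tail ends D0 e \<in> V - Z} \<noteq> {}"
      then obtain e where e: "e \<in> E" "head ends D0 e \<in> Z" "tail ends D0 e \<in> V - Z" by blast
      then have "R (tail ends D0 e) (head ends D0 e)" unfolding R_def by auto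
      moreover obtain a where "a \<in> A" "R\<^sup>*\<^sup>* (head ends D0 e) a" using e(2) unfolding Z_def by blast
      ultimately have "R\<^sup>*\<^sup>* (tail ends D0 e) a" by (meson converse_rtranclp_into_rtranclp)
      then show False using e(3) \<open>a \<in> A\<close> unfolding Z_def by blast
    qed
    then show ?thesis unfolding indeg_set_def by (simp only: card.empty)
  qed
  have onZT: "int (indeg E ends D0 v) = g v" if v: "v \<in> Z - T" for v
  proof (rule ccontr)
    assume ne: "int (indeg E ends D0 v) \<noteq> g v"
    have vV: "v \<in> V" using v ZV by auto
    then have lt: "int (indeg E ends D0 v) < g v" using ne D0b unfolding bounded_orientation_def by force
    obtain a where a: "a \<in> A" "R\<^sup>*\<^sup>* v a" using v unfolding Z_def by blast
    then obtain xs where "rtrancl_path R v xs a" by (auto simp: rtranclp_eq_rtrancl_path)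
    then obtain xs' where p: "rtrancl_path R v xs' a" "distinct (v # xs')" by (rule rtrancl_path_distinct)
    obtain D' where D': "\<forall>x. int (indeg E ends D' x) = int (indeg E ends D0 x) + (if x = v then 1 else 0) - (if x = a then 1 else 0)"
      using path_flip[OF finE p[unfolded R_def]] by blast
    have aT: "a \<in> T" and fa: "int (indeg E ends D0 a) > f a" using a unfolding A_def by auto
    have va: "v \<noteq> a" using aT v by auto
    have "bounded_orientation V E ends f g D'"
      unfolding bounded_orientation_def
    proof
      fix w assume "w \<in> V"
      then show "f w \<le> int (indeg E ends D' w) \<and> int (indeg E ends D' w) \<le> g w"
        using D'[rule_format, of w] D0b lt fa va unfolding bounded_orientation_def by auto
    qed
    then have le: "indeg_set V E ends D0 T \<le> indeg_set V E ends D' T" using D0opt by blast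
    have "(\<Sum>w\<in>T. int (indeg E ends D' w)) = (\<Sum>w\<in>T. int (indeg E ends D0 w) + (if w = v then 1 else 0) - (if w = a then 1 else 0))"
      using D' by simp
    also have "\<dots> = (\<Sum>w\<in>T. int (indeg E ends D0 w)) + (\<Sum>w\<in>T. (if w = v then 1 else 0)) - (\<Sum>w\<in>T. (if w = a then 1 else 0))"
      by (simp add: sum.distrib sum_subtractf)
    also have "\<dots> = (\<Sum>w\<in>T. int (indeg E ends D0 w)) - 1"
      using v aT finT by simp
    finally have "int (indeg_set V E ends D' T) = int (indeg_set V E ends D0 T) - 1"
      using rho_sum[OF finE endsV TV finT, of D'] rho_sum[OF finE endsV TV finT, of D0] by simp
    then show False using le by simp
  qed
  have onTZ: "int (indeg E ends D0 v) = f v" if v: "v \<in> T - Z" for v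
  proof (rule ccontr)
    assume ne: "int (indeg E ends D0 v) \<noteq> f v"
    have vV: "v \<in> V" using v TV by auto
    then have "int (indeg E ends D0 v) > f v" using ne D0b unfolding bounded_orientation_def by force
    then have "v \<in> A" using v unfolding A_def by auto
    then have "v \<in> Z" unfolding Z_def using vV by blast
    then show False using v by blast
  qed
  define iT where "iT = int (card {e\<in>E. fst (ends e) \<in> T \<and> snd (ends e) \<in> T})"
  define iZ where "iZ = int (card {e\<in>E. fst (ends e) \<in> Z \<and> snd (ends e) \<in> Z})"
  define L where "L = iZ - (\<Sum>v\<in>Z-T. g v) + (\<Sum>v\<in>T-Z. f v) - iT"
  have ident: "int (indeg_set V E ends D T) = L + int (indeg_set V E ends D Z)
      + (\<Sum>v\<in>Z-T. g v - int (indeg E ends D v)) + (\<Sum>v\<in>T-Z. int (indeg E ends D v) - f v)" for D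
  proof -
    have "(\<Sum>v\<in>T. int (indeg E ends D v)) = (\<Sum>v\<in>T\<inter>Z. int (indeg E ends D v)) + (\<Sum>v\<in>T-Z. int (indeg E ends D v))"
      using finT by (rule sum.Int_Diff)
    moreover have "(\<Sum>v\<in>Z. int (indeg E ends D v)) = (\<Sum>v\<in>Z\<inter>T. int (indeg E ends D v)) + (\<Sum>v\<in>Z-T. int (indeg E ends D v))"
      using finZ by (rule sum.Int_Diff)
    moreover have "T \<inter> Z = Z \<inter> T" by blast
    ultimately show ?thesis
      using rho_sum[OF finE endsV TV finT, of D] rho_sum[OF finE endsV ZV finZ, of D]
      unfolding L_def iT_def iZ_def by (simp add: sum_subtractf)
  qed
  have s1: "(\<Sum>v\<in>Z-T. g v - int (indeg E ends D v)) \<ge> 0" if "bounded_orientation V E ends f g D" for D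
    using that ZV unfolding bounded_orientation_def by (intro sum_nonneg) auto
  have s2: "(\<Sum>v\<in>T-Z. int (indeg E ends D v) - f v) \<ge> 0" if "bounded_orientation V E ends f g D" for D
    using that TV unfolding bounded_orientation_def by (intro sum_nonneg) auto
  have LB: "L \<le> int (indeg_set V E ends D T)" if "bounded_orientation V E ends f g D" for D
    using ident[of D] s1[OF that] s2[OF that] by simp
  have D0L: "int (indeg_set V E ends D0 T) = L"
    using ident[of D0] rhoZ0 onZT onTZ by simp
  define f' where "f' = (\<lambda>v. if v \<in> Z - T then g v else f v)"
  define g' where "g' = (\<lambda>v. if v \<in> T - Z then f v else g v)"
  have fg': "\<forall>v\<in>V. f v \<le> f' v \<and> f' v \<le> g' v \<and> g' v \<le> g v"
    using fg unfolding f'_def g'_def by auto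
  have main: "(bounded_orientation V E ends f g D \<and>
          (\<forall>D'. bounded_orientation V E ends f g D' \<longrightarrow>
                 indeg_set V E ends D T \<le> indeg_set V E ends D' T))
        \<longleftrightarrow> (bounded_orientation V E ends f' g' D \<and> indeg_set V E ends D Z = 0)" for D
  proof
    assume H: "bounded_orientation V E ends f g D \<and>
          (\<forall>D'. bounded_orientation V E ends f g D' \<longrightarrow>
                 indeg_set V E ends D T \<le> indeg_set V E ends D' T)"
    then have b: "bounded_orientation V E ends f g D" by blast
    have "indeg_set V E ends D T \<le> indeg_set V E ends D0 T" using H D0b by blast
    then have "int (indeg_set V E ends D T) \<le> L" using D0L by linarith
    then have z: "int (indeg_set V E ends D Z) = 0" "(\<Sum>v\<in>Z-T. g v - int (indeg E ends D v)) = 0"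
      "(\<Sum>v\<in>T-Z. int (indeg E ends D v) - f v) = 0"
      using ident[of D] s1[OF b] s2[OF b] by linarith+
    have e1: "\<forall>v\<in>Z-T. g v - int (indeg E ends D v) = 0"
      using z(2) b ZV finZ unfolding bounded_orientation_def
      by (subst (asm) sum_nonneg_eq_0_iff) auto
    have e2: "\<forall>v\<in>T-Z. int (indeg E ends D v) - f v = 0"
      using z(3) b TV finT unfolding bounded_orientation_def
      by (subst (asm) sum_nonneg_eq_0_iff) auto
    have "bounded_orientation V E ends f' g' D"
      using b e1 e2 unfolding bounded_orientation_def f'_def g'_def by auto
    then show "bounded_orientation V E ends f' g' D \<and> indeg_set V E ends D Z = 0" using z(1) by simp
  next
    assume H: "bounded_orientation V E ends f' g' D \<and> indeg_set V E ends D Z = 0"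
    have b: "bounded_orientation V E ends f g D"
      using H fg' unfolding bounded_orientation_def by (meson order_trans)
    have e1: "\<forall>v\<in>Z-T. int (indeg E ends D v) = g v"
      using H ZV unfolding bounded_orientation_def f'_def g'_def by force
    have e2: "\<forall>v\<in>T-Z. int (indeg E ends D v) = f v"
      using H TV unfolding bounded_orientation_def f'_def g'_def by force
    have "int (indeg_set V E ends D T) = L" using ident[of D] H e1 e2 by simp
    then show "bounded_orientation V E ends f g D \<and>
          (\<forall>D'. bounded_orientation V E ends f g D' \<longrightarrow>
                 indeg_set V E ends D T \<le> indeg_set V E ends D' T)"
      using b LB by (metis of_nat_le_iff)
  qed
  show ?thesis
    by (rule exI[of _ f'], rule exI[of _ g'], rule exI[of _ Z]) (use fg' ZV main in blast)
qed

end
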